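(* Let $\mathcal{P}\subseteq\mathbb{Z}_{\geq0}$ with $0\in\mathcal{P}$ and $\mathcal{P}-2\neq\emptyset$. Then $e_\mathcal{P}(z)=\sum_{n\in\mathcal{P}}z^n/n!$ satisfies the H-schema.
   Context: $\mathcal{P}-2=\{n-2:n\in\mathcal{P},n\ge2\}$. A function $\epsilon(z)$ analytic at $0$ with radius of convergence $R$ (possibly $\infty$) satisfies the H-schema if: (i) $\epsilon(0)\neq0$ and $\epsilon(z)$ cannot be written as $\epsilon_0+\epsilon_1z$ for any $\epsilon_0,\epsilon_1\in\mathbb{C}$; (ii) all Taylor coefficients $[z^n]\epsilon(z)$ are $\geq0$; (iii) there is a unique $\tau\in\mathbb{R}_{>0}$ with $\tau<R$ and $\epsilon(\tau)-\tau\epsilon'(\tau)=0$. *)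

theory Defs
  imports "HOL-Complex_Analysis.Complex_Analysis"
begin

definition taylor_coeff :: "(complex \<Rightarrow> complex) \<Rightarrow> nat \<Rightarrow> complex" where
  "taylor_coeff f n = (deriv ^^ n) f 0 / fact n"

definition H_schema :: "(complex \<Rightarrow> complex) \<Rightarrow> bool" where
  "H_schema eps \<longleftrightarrow>
     eps analytic_on {0} \<and>
     eps 0 \<noteq> 0 \<and>
     \<not> (\<exists>e0 e1. \<forall>\<^sub>F z in nhds 0. eps z = e0 + e1 * z) \<and>
     (\<forall>n. taylor_coeff eps n \<in> \<real> \<and> Re (taylor_coeff eps n) \<ge> 0) \<and>
     (\<exists>!\<tau>::real. 0 < \<tau> \<and> ereal \<tau> < conv_radius (taylor_coeff eps) \<and>
        eps (complex_of_real \<tau>) - complex_of_real \<tau> * deriv eps (complex_of_real \<tau>) = 0)"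

definition e_P :: "nat set \<Rightarrow> complex \<Rightarrow> complex" where
  "e_P P z = (\<Sum>n. if n \<in> P then z ^ n / fact n else 0)"

end

theory Submission imports Defs begin

locale eP =
  fixes P :: "nat set"
begin

definition ar :: "nat \<Rightarrow> real" where "ar n = (if n \<in> P then 1 / fact n else 0)"
definition a :: "nat \<Rightarrow> complex" where "a n = of_real (ar n)"
definition b :: "nat \<Rightarrow> real" where "b n = (1 - real n) * ar n"

lemma summ: "summable (\<lambda>n. a n * z ^ n)"
proof (rule summable_comparison_test)
  show "\<exists>N. \<forall>n\<ge>N. norm (a n * z ^ n) \<le> inverse (fact n) * norm z ^ n"
    by (auto simp: a_def ar_def norm_mult norm_power field_simps)
  show "summable (\<lambda>n. inverse (fact n) * norm z ^ n :: real)" by (rule summable_exp)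
qed

lemma eP_eq: "e_P P = (\<lambda>z. \<Sum>n. a n * z ^ n)"
  by (auto simp: e_P_def a_def ar_def intro!: ext suminf_cong)

lemma deriv_eq: "deriv (e_P P) z = (\<Sum>n. diffs a n * z ^ n)"
  unfolding eP_eq by (rule DERIV_imp_deriv, rule termdiffs_strong_converges_everywhere, rule summ)

lemma diffs_summ: "summable (\<lambda>n. diffs a n * z ^ n)"
  by (rule termdiff_converges_all) (rule summ)

lemma sums_main: "(\<lambda>n. of_real (b n) * z ^ n) sums (e_P P z - z * deriv (e_P P) z)"
proof -
  define f where "f n = of_nat n * a n * z ^ n" for n
  have "(\<lambda>n. diffs a n * z ^ n * z) sums ((\<Sum>n. diffs a n * z ^ n) * z)"
    by (rule sums_mult2, rule summable_sums, rule diffs_summ)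
  moreover have "(\<lambda>n. diffs a n * z ^ n * z) = (\<lambda>n. f (Suc n))"
    by (auto simp: f_def diffs_def)
  ultimately have "(\<lambda>n. f (Suc n)) sums (z * deriv (e_P P) z)"
    by (simp add: deriv_eq mult.commute)
  hence f: "f sums (z * deriv (e_P P) z)"
    by (subst (asm) sums_Suc_iff) (simp add: f_def)
  have e: "(\<lambda>n. a n * z ^ n) sums e_P P z"
    unfolding eP_eq by (rule summable_sums, rule summ)
  from sums_diff[OF e f] show ?thesis
    by (simp add: f_def b_def a_def algebra_simps)
qed

lemma sums_real: "(\<lambda>n. b n * t ^ n) sums Re (e_P P (of_real t) - of_real t * deriv (e_P P) (of_real t))"
  and eq_real: "e_P P (of_real t) - of_real t * deriv (e_P P) (of_real t)
       = of_real (Re (e_P P (of_real t) - of_real t * deriv (e_P P) (of_real t)))"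
proof -
  have s: "(\<lambda>n. of_real (b n * t ^ n)) sums (e_P P (of_real t) - of_real t * deriv (e_P P) (of_real t))"
    using sums_main[of "of_real t"] by simp
  hence "(\<lambda>n. Re (of_real (b n * t ^ n))) sums Re (e_P P (of_real t) - of_real t * deriv (e_P P) (of_real t))"
    by (rule sums_Re)
  thus "(\<lambda>n. b n * t ^ n) sums Re (e_P P (of_real t) - of_real t * deriv (e_P P) (of_real t))" by simp
  hence "(\<lambda>n. of_real (b n * t ^ n) :: complex) sums of_real (Re (e_P P (of_real t) - of_real t * deriv (e_P P) (of_real t)))"
    by (subst sums_of_real_iff)
  from sums_unique2[OF s this] show "e_P P (of_real t) - of_real t * deriv (e_P P) (of_real t)
       = of_real (Re (e_P P (of_real t) - of_real t * deriv (e_P P) (of_real t)))" .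
qed


definition r :: "real \<Rightarrow> real" where "r t = (\<Sum>n. b n * t ^ n)"

lemma r_sums: "(\<lambda>n. b n * t ^ n) sums r t"
  unfolding r_def using sums_real by (simp add: sums_iff)

lemma expr_eq: "e_P P (of_real t) - of_real t * deriv (e_P P) (of_real t) = of_real (r t)"
proof -
  have "Re (e_P P (of_real t) - of_real t * deriv (e_P P) (of_real t)) = r t"
    using sums_unique2[OF sums_real[of t] r_sums[of t]] .
  thus ?thesis using eq_real[of t] by metis
qed

lemma r_cont: "isCont r x"
  unfolding r_def by (rule isCont_powser_converges_everywhere) (use r_sums in \<open>auto simp: sums_iff\<close>)

lemma r0: "0 \<in> P \<Longrightarrow> r 0 = 1"
  unfolding r_def by (simp add: b_def ar_def)

lemma b_nonpos: "n \<noteq> 0 \<Longrightarrow> b n \<le> 0"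
  by (auto simp: b_def ar_def intro!: divide_nonpos_pos)

lemma b_neg: "m \<in> P \<Longrightarrow> m \<ge> 2 \<Longrightarrow> b m < 0"
  by (auto simp: b_def ar_def intro!: divide_neg_pos)

lemma r_strict: assumes "m \<in> P" "m \<ge> 2" "0 \<le> s" "s < t" shows "r t < r s"
proof -
  have "(\<lambda>n. b n * s ^ n - b n * t ^ n) sums (r s - r t)"
    by (intro sums_diff r_sums)
  moreover have "0 \<le> b n * s ^ n - b n * t ^ n" for n
  proof (cases "n = 0")
    case False
    have "s ^ n \<le> t ^ n" using assms by (intro power_mono) auto
    thus ?thesis using b_nonpos[OF False] by (simp add: mult_left_mono_neg)
  qed simp
  moreover have "0 < b m * s ^ m - b m * t ^ m"
  proof -
    have "s ^ m < t ^ m" using assms by (intro power_strict_mono) auto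
    thus ?thesis using b_neg[OF assms(1,2)] by (simp add: mult_strict_left_mono_neg)
  qed
  ultimately have "0 < r s - r t"
    using suminf_pos2[of "\<lambda>n. b n * s ^ n - b n * t ^ n" m] by (simp add: sums_iff)
  thus ?thesis by simp
qed

lemma r_neg: assumes "0 \<in> P" "m \<in> P" "m \<ge> 2" shows "\<exists>T>0. r T < 0"
proof -
  define T :: real where "T = 2 * fact m"
  have T1: "T \<ge> 1" proof -
  have "(1::real) \<le> fact m" by (rule fact_ge_1)
  thus ?thesis unfolding T_def by linarith
qed
  define g where "g n = - (b n * T ^ n)" for n
  have "g sums (- r T)" unfolding g_def by (intro sums_minus r_sums)
  have "sum g {0, m} \<le> suminf g"
  proof (rule sum_le_suminf)
    show "summable g" using \<open>g sums (- r T)\<close> by (simp add: sums_iff)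
    show "0 \<le> g n" if "n \<in> - {0, m}" for n
      using b_nonpos[of n] that T1 by (auto simp: g_def mult_nonpos_nonneg)
  qed simp
  hence le: "- 1 - b m * T ^ m \<le> - r T"
    using \<open>g sums (- r T)\<close> assms by (simp add: sums_iff g_def b_def ar_def)
  have "T \<le> T ^ m" using T1 assms by (simp add: power_increasing[of 1 m T, simplified])
  have "2 \<le> (real m - 1) / fact m * T ^ m"
  proof -
    have "2 = 1 / fact m * T" by (simp add: T_def)
    also have "\<dots> \<le> 1 / fact m * T ^ m" using \<open>T \<le> T ^ m\<close> by (simp add: divide_right_mono)
    also have "\<dots> \<le> (real m - 1) / fact m * T ^ m"
      using assms T1 by (intro mult_right_mono divide_right_mono) auto
    finally show ?thesis .
  qed
  moreover have "(1 - real m) * T ^ m / fact m = - ((real m - 1) * T ^ m / fact m)"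
    by (simp add: field_simps)
  ultimately have "b m * T ^ m \<le> -2" using assms by (simp add: b_def ar_def)
  hence "r T < 0" using le by simp
  thus ?thesis using T1 by (intro exI[of _ T]) auto
qed


lemma conv_a: "conv_radius a = \<infinity>"
  by (rule conv_radius_inftyI'') (rule summ)

lemma expn: "e_P P has_fps_expansion Abs_fps a"
  unfolding has_fps_expansion_def fps_conv_radius_def
  by (simp add: conv_a eval_fps_def eP_eq)

lemma tc: "taylor_coeff (e_P P) = a"
  using fps_nth_fps_expansion[OF expn] by (auto simp: taylor_coeff_def fun_eq_iff)

lemma affine_deriv:
  "(deriv ^^ Suc (Suc k)) (\<lambda>z::complex. e0 + e1 * z) 0 = 0"
proof -
  have d1: "deriv (\<lambda>z::complex. e0 + e1 * z) = (\<lambda>z. e1)"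
    by (rule ext, rule DERIV_imp_deriv) (auto intro!: derivative_eq_intros)
  have d2: "deriv (\<lambda>z::complex. e1) = (\<lambda>z. 0)"
    by (rule ext, rule DERIV_imp_deriv) (auto intro!: derivative_eq_intros)
  have d0: "(deriv ^^ k) (\<lambda>z::complex. 0) = (\<lambda>z. 0)" for k
  proof (induction k)
    case (Suc k)
    thus ?case by (simp add: DERIV_imp_deriv[OF DERIV_const])
  qed simp
  show ?thesis by (simp only: funpow_Suc_right o_def d1 d2 d0)
qed

end

theorem lemma7p2:
  fixes P :: "nat set"
  assumes "0 \<in> P"
    and "{n - 2 | n. n \<in> P \<and> n \<ge> 2} \<noteq> {}"
  shows "H_schema (e_P P)"
proof -
  interpret eP P .
  from assms(2) obtain m where m: "m \<in> P" "m \<ge> 2" by auto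
  have A: "e_P P analytic_on {0}" by (rule has_fps_expansion_imp_analytic_0[OF expn])
  have B: "e_P P 0 \<noteq> 0"
    using eP_eq assms(1) by (simp add: a_def ar_def)
  have C: "\<not> (\<exists>e0 e1. \<forall>\<^sub>F z in nhds 0. e_P P z = e0 + e1 * z)"
  proof
    assume "\<exists>e0 e1. \<forall>\<^sub>F z in nhds 0. e_P P z = e0 + e1 * z"
    then obtain e0 e1 where ev: "\<forall>\<^sub>F z in nhds 0. e_P P z = e0 + e1 * z" by blast
    obtain k where k: "m = Suc (Suc k)" using m(2) by (metis add_2_eq_Suc le_Suc_ex)
    have "(deriv ^^ m) (e_P P) 0 = (deriv ^^ m) (\<lambda>z. e0 + e1 * z) 0"
      by (rule higher_deriv_cong_ev[OF ev refl])
    also have "\<dots> = 0" unfolding k by (rule affine_deriv)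
    finally have "taylor_coeff (e_P P) m = 0" by (simp add: taylor_coeff_def)
    thus False using m by (simp add: tc a_def ar_def)
  qed
  have D: "\<forall>n. taylor_coeff (e_P P) n \<in> \<real> \<and> Re (taylor_coeff (e_P P) n) \<ge> 0"
    by (auto simp: tc a_def ar_def)
  obtain T where T: "T > 0" "r T < 0" using r_neg[OF assms(1) m] by blast
  have "\<exists>x\<ge>0. x \<le> T \<and> r x = 0"
    by (rule IVT2) (use T r0[OF assms(1)] r_cont in auto)
  then obtain x where x: "0 \<le> x" "r x = 0" by blast
  have xpos: "x > 0" using x r0[OF assms(1)] by (cases "x = 0") auto
  have E: "\<exists>!\<tau>::real. 0 < \<tau> \<and> ereal \<tau> < conv_radius (taylor_coeff (e_P P)) \<and>
        e_P P (complex_of_real \<tau>) - complex_of_real \<tau> * deriv (e_P P) (complex_of_real \<tau>) = 0"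
  proof (rule ex1I[of _ x])
    show "0 < x \<and> ereal x < conv_radius (taylor_coeff (e_P P)) \<and>
        e_P P (complex_of_real x) - complex_of_real x * deriv (e_P P) (complex_of_real x) = 0"
      using xpos x by (simp add: tc conv_a expr_eq)
  next
    fix y assume "0 < y \<and> ereal y < conv_radius (taylor_coeff (e_P P)) \<and>
        e_P P (complex_of_real y) - complex_of_real y * deriv (e_P P) (complex_of_real y) = 0"
    hence y: "0 < y" "r y = 0" by (auto simp: expr_eq)
    show "y = x"
    proof (rule ccontr)
      assume "y \<noteq> x"
      hence "y < x \<or> x < y" by linarith
      thus False using r_strict[OF m, of y x] r_strict[OF m, of x y] x y by auto
    qed
  qed
  show ?thesis unfolding H_schema_def using A B C D E by blast
qed

end
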